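(* Given $R_1>0$, there exists a unique $q\in C([0,\infty))\cap C^\infty((0,\infty))$ solution to $$\partial_{ss}q+\Big(\frac1s+\frac{3s}{R_1(1+\frac{s^2}{2R_1})}\Big)\partial_sq-\frac{q}{s^2}=-\frac{12s}{(1+\frac{s^2}{2R_1})^3},\quad s\in(0,\infty),\qquad q(0)=0,\quad\lim_{s\to\infty}q(s)=0.$$ Furthermore, $$q(s)=\frac{48R_1^3}{5s^3}+\mathrm{rem}(s),\qquad\partial_sq(s)=-\frac{144R_1^3}{5s^4}+\frac{\mathrm{rem}(s)}{s},$$ where $|\mathrm{rem}(s)|\le K[R_1]/s^4$ for $s>1$, with $K[R_1]$ a constant depending only on $R_1$. *)

theory Defs
  imports "HOL-Analysis.Analysis"
begin

text \<open>C-infinity on a set S (intended for open S): every iterated derivative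
  exists, i.e. is differentiable at every point of S.\<close>
definition smooth_on :: "real set \<Rightarrow> (real \<Rightarrow> real) \<Rightarrow> bool" where
  "smooth_on S f \<longleftrightarrow> (\<forall>n. \<forall>x\<in>S. ((deriv ^^ n) f) differentiable (at x))"

definition is_sol :: "real \<Rightarrow> (real \<Rightarrow> real) \<Rightarrow> bool" where
  "is_sol R1 q \<longleftrightarrow>
     continuous_on {0..} q \<and> smooth_on {0<..} q \<and>
     (\<forall>s>0. deriv (deriv q) s
              + (1 / s + 3 * s / (R1 * (1 + s\<^sup>2 / (2 * R1)))) * deriv q s
              - q s / s\<^sup>2
            = - 12 * s / (1 + s\<^sup>2 / (2 * R1)) ^ 3) \<and>
     q 0 = 0 \<and> (q \<longlongrightarrow> 0) at_top"

end

theory Submission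
  imports Defs "HOL-Computational_Algebra.Polynomial" "HOL-Real_Asymp.Real_Asymp"
begin

lemma maxp:
  fixes h hp hpp :: "real \<Rightarrow> real"
  assumes cont: "continuous_on {0..} h" and h0: "h 0 = 0" and lim: "(h \<longlongrightarrow> 0) at_top"
    and d1: "\<And>s. s > 0 \<Longrightarrow> (h has_real_derivative hp s) (at s)"
    and d2: "\<And>s. s > 0 \<Longrightarrow> (hp has_real_derivative hpp s) (at s)"
    and eq: "\<And>s. s > 0 \<Longrightarrow> hp s = 0 \<Longrightarrow> h s > 0 \<Longrightarrow> hpp s > 0"
    and x0: "x \<ge> 0"
  shows "h x \<le> 0"
proof (rule ccontr)
  assume "\<not> h x \<le> 0"
  hence hx: "h x > 0" by simp
  have "eventually (\<lambda>s. dist (h s) 0 < h x) at_top"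
    using lim hx by (simp add: tendsto_iff)
  then obtain B where B: "\<And>s. s \<ge> B \<Longrightarrow> h s < h x"
    unfolding eventually_at_top_linorder by (metis dist_real_def diff_zero abs_less_iff)
  define M where "M = max B x"
  have "continuous_on {0..M} h" using cont by (rule continuous_on_subset) auto
  then obtain s0 where s0: "s0 \<in> {0..M}" and smax: "\<And>y. y \<in> {0..M} \<Longrightarrow> h y \<le> h s0"
  proof -
    have "M \<ge> 0" using x0 M_def by auto
    then show ?thesis using continuous_attains_sup[of "{0..M}" h] \<open>continuous_on {0..M} h\<close> that by auto
  qed
  have "h x \<le> h s0" using smax x0 M_def by auto
  hence hs0: "h s0 > 0" using hx by linarith
  hence s0p: "s0 > 0" using s0 h0 by (cases "s0 = 0") auto
  have gmax: "h y \<le> h s0" if "y \<ge> 0" for y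
  proof (cases "y \<le> M")
    case True thus ?thesis using smax that by auto
  next
    case False thus ?thesis using B[of y] M_def \<open>h x \<le> h s0\<close> by (auto simp: not_le)
  qed
  have "hp s0 = 0"
    by (rule DERIV_local_max[OF d1[OF s0p] s0p]) (auto intro!: gmax)
  hence "hpp s0 > 0" using eq s0p hs0 by auto
  then obtain d where d: "d > 0" and dd: "\<And>t. t > 0 \<Longrightarrow> t < d \<Longrightarrow> hp s0 < hp (s0 + t)"
    using DERIV_pos_inc_right[OF d2[OF s0p]] by blast
  obtain z where z: "s0 < z" "z < s0 + d/2" and zz: "h (s0 + d/2) - h s0 = (s0 + d/2 - s0) * hp z"
    using MVT2[of s0 "s0 + d/2" h hp] d d1 s0p by force
  have "hp z > 0" using dd[of "z - s0"] z \<open>hp s0 = 0\<close> by auto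
  hence "(s0 + d/2 - s0) * hp z > 0" using d by simp
  hence "h (s0 + d/2) > h s0" using zz by linarith
  moreover have "h (s0 + d/2) \<le> h s0" using gmax s0p d by auto
  ultimately show False by simp
qed

lemma rat_deriv:
  fixes c x :: real
  assumes c: "c > 0"
  shows "((\<lambda>s. poly p s / (c+s^2)^Suc m) has_real_derivative
     poly (pderiv p * [:c,0,1:] - smult (2 * of_nat (Suc m)) (p * [:0,1:])) x / (c+x^2)^Suc (Suc m)) (at x)"
proof -
  define u where "u = c + x^2"
  have up: "u > 0" using c by (simp add: u_def add_pos_nonneg)
  have dg: "((\<lambda>s. c + s^2) has_real_derivative 2 * x) (at x)"
    by (auto intro!: derivative_eq_intros)
  have dp: "((\<lambda>s. (c + s^2) ^ Suc m) has_real_derivative (1 + of_nat m) * (2 * x * (c + x^2) ^ m)) (at x)"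
    by (rule DERIV_power_Suc[OF dg])
  have q: "((\<lambda>s. poly p s / (c+s^2)^Suc m) has_real_derivative
     (poly (pderiv p) x * (c+x^2)^Suc m - (1 + of_nat m) * (2 * x * (c + x^2) ^ m) * poly p x) / ((c+x^2)^Suc m) ^ Suc (Suc 0)) (at x)"
    by (rule DERIV_quotient[OF poly_DERIV dp]) (use up u_def in simp)
  have e1: "poly (pderiv p * [:c,0,1:] - smult (2 * of_nat (Suc m)) (p * [:0,1:])) x
       = poly (pderiv p) x * u - 2 * (1 + of_nat m) * x * poly p x"
    by (simp add: u_def algebra_simps power2_eq_square)
  have e2: "(u^Suc m) ^ Suc (Suc 0) = u^m * u^Suc (Suc m)"
    unfolding power_mult[symmetric] power_add[symmetric] by simp
  have e3: "poly (pderiv p) x * u^Suc m - (1 + of_nat m) * (2 * x * u ^ m) * poly p x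
     = u^m * (poly (pderiv p) x * u - 2 * (1 + of_nat m) * x * poly p x)"
    unfolding power_Suc by algebra
  have "(poly (pderiv p) x * (c+x^2)^Suc m - (1 + of_nat m) * (2 * x * (c + x^2) ^ m) * poly p x) / ((c+x^2)^Suc m) ^ Suc (Suc 0)
     = u^m * (poly (pderiv p) x * u - 2 * (1 + of_nat m) * x * poly p x) / (u^m * u^Suc (Suc m))"
    unfolding u_def[symmetric] e2 e3 ..
  also have "\<dots> = poly (pderiv p * [:c,0,1:] - smult (2 * of_nat (Suc m)) (p * [:0,1:])) x / (c+x^2)^Suc (Suc m)"
    unfolding e1 u_def[symmetric] using up by simp
  finally show ?thesis using q by simp
qed

lemma rat_smooth:
  fixes c :: real
  assumes c: "c > 0"
  shows "smooth_on S (\<lambda>s. poly p s / (c+s^2)^Suc m)"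
proof -
  have ex: "\<exists>p' m'. (deriv ^^ n) (\<lambda>s. poly p s / (c+s^2)^Suc m) = (\<lambda>s. poly p' s / (c+s^2)^Suc m')" for n
  proof (induction n)
    case 0 thus ?case by auto
  next
    case (Suc n)
    then obtain p' m' where e: "(deriv ^^ n) (\<lambda>s. poly p s / (c+s^2)^Suc m) = (\<lambda>s. poly p' s / (c+s^2)^Suc m')" by blast
    have "(deriv ^^ Suc n) (\<lambda>s. poly p s / (c+s^2)^Suc m) = deriv ((deriv ^^ n) (\<lambda>s. poly p s / (c+s^2)^Suc m))"
      by simp
    also have "\<dots> = deriv (\<lambda>s. poly p' s / (c+s^2)^Suc m')" by (simp only: e)
    also have "\<dots> = (\<lambda>s. poly (pderiv p' * [:c,0,1:] - smult (2 * of_nat (Suc m')) (p' * [:0,1:])) s / (c+s^2)^Suc (Suc m'))"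
      by (rule ext, rule DERIV_imp_deriv, rule rat_deriv[OF c])
    finally show ?case by blast
  qed
  show ?thesis unfolding smooth_on_def
  proof (intro allI ballI)
    fix n x
    obtain p' m' where e: "(deriv ^^ n) (\<lambda>s. poly p s / (c+s^2)^Suc m) = (\<lambda>s. poly p' s / (c+s^2)^Suc m')"
      using ex by blast
    show "(deriv ^^ n) (\<lambda>s. poly p s / (c+s^2)^Suc m) differentiable at x"
      unfolding e real_differentiable_def using rat_deriv[OF c] by blast
  qed
qed


lemma qp_d1:
  fixes a C x :: real assumes a: "a > 0"
  shows "((\<lambda>s. C * s / (a + s^2)^2) has_real_derivative C * (a - 3 * x^2) / (a + x^2)^3) (at x)"
proof -
  have u: "a + x^2 > 0" using a by (simp add: add_pos_nonneg)
  have "((\<lambda>s. C * s / (a + s^2)^2) has_real_derivative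
     (C * (a + x^2)^2 - (2 * (a + x^2) * (2 * x)) * (C * x)) / ((a + x^2)^2) ^ Suc (Suc 0)) (at x)"
    by (rule DERIV_quotient) (use u in \<open>auto intro!: derivative_eq_intros simp: power2_eq_square\<close>)
  moreover have "(C * (a + x^2)^2 - (2 * (a + x^2) * (2 * x)) * (C * x)) / ((a + x^2)^2) ^ Suc (Suc 0)
     = C * (a - 3 * x^2) / (a + x^2)^3"
    using u by (simp add: field_simps) algebra
  ultimately show ?thesis by simp
qed

lemma qp_d2:
  fixes a C x :: real assumes a: "a > 0"
  shows "((\<lambda>s. C * (a - 3 * s^2) / (a + s^2)^3) has_real_derivative 12 * C * x * (x^2 - a) / (a + x^2)^4) (at x)"
proof -
  have u: "a + x^2 > 0" using a by (simp add: add_pos_nonneg)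
  have "((\<lambda>s. C * (a - 3 * s^2) / (a + s^2)^3) has_real_derivative
     ((C * (- 6 * x)) * (a + x^2)^3 - (3 * (a + x^2)^2 * (2 * x)) * (C * (a - 3 * x^2))) / ((a + x^2)^3) ^ Suc (Suc 0)) (at x)"
    by (rule DERIV_quotient) (use u in \<open>auto intro!: derivative_eq_intros simp: power2_eq_square\<close>)
  moreover have "((C * (- 6 * x)) * (a + x^2)^3 - (3 * (a + x^2)^2 * (2 * x)) * (C * (a - 3 * x^2))) / ((a + x^2)^3) ^ Suc (Suc 0)
     = 12 * C * x * (x^2 - a) / (a + x^2)^4"
    using u by (simp add: field_simps) algebra
  ultimately show ?thesis by simp
qed

lemma ode_a:
  fixes a u s C :: real assumes u: "u = a + s^2" "u > 0" and s: "s > 0" and C: "C = 6 * a^3 / 5"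
  shows "12 * C * s * (s^2 - a) / u^4 + (1 / s + 6 * s / u) * (C * (a - 3 * s^2) / u^3) - C * s / u^2 / s^2
     = - 12 * s * a^3 / u^3"
proof -
  have key: "12 * C * s^2 * (s^2 - a) + (u + 6 * s^2) * C * (a - 3 * s^2) - C * u^2 = -12 * s^2 * a^3 * u"
    unfolding u(1) C by algebra
  have "12 * C * s * (s^2 - a) / u^4 + (1 / s + 6 * s / u) * (C * (a - 3 * s^2) / u^3) - C * s / u^2 / s^2
      = (12 * C * s^2 * (s^2 - a) + (u + 6 * s^2) * C * (a - 3 * s^2) - C * u^2) / (s * u^4)"
    using u(2) s by (simp add: field_simps) algebra
  also have "\<dots> = - 12 * s * a^3 / u^3" unfolding key using u(2) s by (simp add: field_simps) algebra
  finally show ?thesis .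
qed

lemma ode:
  fixes R1 s :: real assumes R: "R1 > 0" and s: "s > 0"
  shows "12 * (48 * R1^3/5) * s * (s^2 - 2*R1) / (2*R1 + s^2)^4
     + (1 / s + 3 * s / (R1 * (1 + s\<^sup>2 / (2 * R1)))) * ((48 * R1^3/5) * (2*R1 - 3 * s^2) / (2*R1 + s^2)^3)
     - (48 * R1^3/5) * s / (2*R1 + s^2)^2 / s\<^sup>2
   = - 12 * s / (1 + s\<^sup>2 / (2 * R1)) ^ 3"
proof -
  have u: "2*R1 + s^2 > 0" using R by (simp add: add_pos_nonneg)
  have e: "1 + s\<^sup>2 / (2 * R1) = (2*R1 + s^2) / (2*R1)" using R by (simp add: field_simps)
  have e1: "3 * s / (R1 * (1 + s\<^sup>2 / (2 * R1))) = 6 * s / (2*R1 + s^2)" unfolding e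
  proof -
    have h: "R1 * ((2*R1 + s^2)/(2*R1)) = (2*R1+s^2)/2" using R by (simp add: field_simps)
    show "3 * s / (R1 * ((2 * R1 + s\<^sup>2) / (2 * R1))) = 6 * s / (2 * R1 + s\<^sup>2)" by (subst h) simp
  qed
  have e2: "- 12 * s / (1 + s\<^sup>2 / (2 * R1)) ^ 3 = - 12 * s * (2*R1)^3 / (2*R1 + s^2)^3" unfolding e using R u
    by (simp add: power_divide)
  have C: "48 * R1^3/5 = 6 * (2*R1)^3 / 5" by simp
  show ?thesis unfolding e1 e2 by (rule ode_a[OF refl u s C])
qed

lemma frac_bound:
  fixes s N M D :: real
  assumes s: "s > 1" and N: "0 \<le> N" "N \<le> M * s^j" and D: "D \<ge> s^(j+4)"
  shows "N / D \<le> M / s^4"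
proof -
  have sj: "s^j > 0" "s^(j+4) > 0" using s by simp_all
  have Dp: "D > 0" using D sj by linarith
  have "N / D \<le> M * s^j / s^(j+4)"
    using N D Dp sj by (meson divide_mono order_trans less_imp_le)
  also have "\<dots> = M / s^4" using s by (simp add: power_add)
  finally show ?thesis .
qed

lemma bound1:
  fixes a C s :: real assumes a: "a > 0" and C: "C \<ge> 0" and s: "s > 1"
  shows "\<bar>C * s / (a + s^2)^2 - C / s^3\<bar> \<le> C * (2*a + a^2) / s^4"
proof -
  have u: "a + s^2 > 0" using a by (simp add: add_pos_nonneg)
  have e: "C * s / (a + s^2)^2 - C / s^3 = - (C * (2 * a * s^2 + a^2) / (s^3 * (a + s^2)^2))"
    using u s by (simp add: field_simps) algebra
  have "C * (2 * a * s^2 + a^2) / (s^3 * (a + s^2)^2) \<le> C * (2*a + a^2) / s^4"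
  proof (rule frac_bound[OF s, of _ _ 2])
    show "0 \<le> C * (2 * a * s^2 + a^2)" using a C by simp
    have "1 \<le> s^2" using s by (simp add: one_le_power less_imp_le)
    hence "a^2 * 1 \<le> a^2 * s^2" by (intro mult_left_mono) auto
    hence "a^2 \<le> a^2 * s^2" by simp
    thus "C * (2 * a * s^2 + a^2) \<le> C * (2*a + a^2) * s^2" using C
      by (simp add: algebra_simps mult_left_mono)
    have "(s^2)^2 \<le> (a + s^2)^2" using a by (intro power_mono) auto
    hence "s^3 * (s^2)^2 \<le> s^3 * (a + s^2)^2" using s by (intro mult_left_mono) auto
    moreover have "s^(2+4) \<le> s^3 * (s^2)^2" using s
      by (simp add: power_add[symmetric] power_mult[symmetric] power_increasing)
    ultimately show "s^(2+4) \<le> s^3 * (a + s^2)^2" by linarith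
  qed
  thus ?thesis unfolding e using a C s u by simp
qed

lemma bound2:
  fixes a C s :: real assumes a: "a > 0" and C: "C \<ge> 0" and s: "s > 1"
  shows "\<bar>s * (C * (a - 3 * s^2) / (a + s^2)^3 + 3 * C / s^4)\<bar> \<le> C * (10*a + 9*a^2 + 3*a^3) / s^4"
proof -
  have u: "a + s^2 > 0" using a by (simp add: add_pos_nonneg)
  have e: "s * (C * (a - 3 * s^2) / (a + s^2)^3 + 3 * C / s^4) = C * (10 * a * s^4 + 9 * a^2 * s^2 + 3 * a^3) / (s^3 * (a + s^2)^3)"
    using u s by (simp add: field_simps) algebra
  have "C * (10 * a * s^4 + 9 * a^2 * s^2 + 3 * a^3) / (s^3 * (a + s^2)^3) \<le> C * (10*a + 9*a^2 + 3*a^3) / s^4"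
  proof (rule frac_bound[OF s, of _ _ 4])
    show "0 \<le> C * (10 * a * s^4 + 9 * a^2 * s^2 + 3 * a^3)" using a C by simp
    have s2: "s^2 \<le> s^4" "1 \<le> s^4" using s by (auto intro!: power_increasing one_le_power)
    have "9 * a^2 * s^2 \<le> 9 * a^2 * s^4" using s2 a by (intro mult_left_mono) auto
    moreover have "3 * a^3 \<le> 3 * a^3 * s^4" using s2 a by simp
    ultimately have "10 * a * s^4 + 9 * a^2 * s^2 + 3 * a^3 \<le> (10*a + 9*a^2 + 3*a^3) * s^4"
      by (simp add: algebra_simps)
    thus "C * (10 * a * s^4 + 9 * a^2 * s^2 + 3 * a^3) \<le> C * (10*a + 9*a^2 + 3*a^3) * s^4" using C
      by (metis mult.assoc mult_left_mono)
    have "(s^2)^3 \<le> (a + s^2)^3" using a by (intro power_mono) auto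
    hence "s^3 * (s^2)^3 \<le> s^3 * (a + s^2)^3" using s by (intro mult_left_mono) auto
    moreover have "s^(4+4) \<le> s^3 * (s^2)^3" using s
      by (simp add: power_add[symmetric] power_mult[symmetric] power_increasing)
    ultimately show "s^(4+4) \<le> s^3 * (a + s^2)^3" by linarith
  qed
  moreover have "0 \<le> C * (10 * a * s^4 + 9 * a^2 * s^2 + 3 * a^3) / (s^3 * (a + s^2)^3)"
    using a C s u by simp
  ultimately show ?thesis unfolding e by simp
qed

lemma lim0:
  fixes a C :: real assumes a: "a > 0"
  shows "((\<lambda>s. C * s / (a + s^2)^2) \<longlongrightarrow> 0) at_top"
  by real_asymp


lemma sol_facts:
  assumes "is_sol R1 q" "s > 0"
  shows "(q has_real_derivative deriv q s) (at s)" "(deriv q has_real_derivative deriv (deriv q) s) (at s)"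
proof -
  have sm: "smooth_on {0<..} q" using assms(1) unfolding is_sol_def by blast
  have "((deriv ^^ 0) q) differentiable (at s)" "((deriv ^^ 1) q) differentiable (at s)"
    using sm assms(2) unfolding smooth_on_def by blast+
  thus "(q has_real_derivative deriv q s) (at s)" "(deriv q has_real_derivative deriv (deriv q) s) (at s)"
    by (simp_all add: DERIV_deriv_iff_real_differentiable)
qed

lemma uniq:
  assumes s1: "is_sol R1 q1" and s2: "is_sol R1 q2" and x: "x \<ge> 0"
  shows "q1 x \<le> q2 x"
proof -
  have E: "\<And>q s. is_sol R1 q \<Longrightarrow> s > 0 \<Longrightarrow> deriv (deriv q) s
              + (1 / s + 3 * s / (R1 * (1 + s\<^sup>2 / (2 * R1)))) * deriv q s
              - q s / s\<^sup>2
            = - 12 * s / (1 + s\<^sup>2 / (2 * R1)) ^ 3" unfolding is_sol_def by blast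
  show ?thesis
  proof -
    have "(\<lambda>s. q1 s - q2 s) x \<le> 0"
    proof (rule maxp[where h = "\<lambda>s. q1 s - q2 s" and hp = "\<lambda>s. deriv q1 s - deriv q2 s" and hpp = "\<lambda>s. deriv (deriv q1) s - deriv (deriv q2) s"])
      show "continuous_on {0..} (\<lambda>s. q1 s - q2 s)" using s1 s2 unfolding is_sol_def
        by (intro continuous_intros) auto
      show "q1 0 - q2 0 = 0" using s1 s2 unfolding is_sol_def by simp
      have "((\<lambda>s. q1 s - q2 s) \<longlongrightarrow> 0 - 0) at_top" using s1 s2 unfolding is_sol_def
        by (intro tendsto_intros) auto
      thus "((\<lambda>s. q1 s - q2 s) \<longlongrightarrow> 0) at_top" by simp
      show "((\<lambda>s. q1 s - q2 s) has_real_derivative deriv q1 s - deriv q2 s) (at s)" if "s > 0" for s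
        using sol_facts[OF s1 that] sol_facts[OF s2 that] by (intro derivative_intros) auto
      show "((\<lambda>s. deriv q1 s - deriv q2 s) has_real_derivative deriv (deriv q1) s - deriv (deriv q2) s) (at s)" if "s > 0" for s
        using sol_facts[OF s1 that] sol_facts[OF s2 that] by (intro derivative_intros) auto
      show "deriv (deriv q1) s - deriv (deriv q2) s > 0"
        if "s > 0" "deriv q1 s - deriv q2 s = 0" "q1 s - q2 s > 0" for s
      proof -
        have "(q1 s - q2 s) / s^2 > 0" using that by simp
        moreover have "deriv q1 s = deriv q2 s" using that by simp
        ultimately show ?thesis using E[OF s1 that(1)] E[OF s2 that(1)]
          by (simp add: diff_divide_distrib)
      qed
    qed (rule x)
    thus ?thesis by simp
  qed
qed

theorem lemma3:
  fixes R1 :: real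
  assumes "R1 > 0"
  shows "(\<exists>q. is_sol R1 q)
    \<and> (\<forall>q1 q2. is_sol R1 q1 \<longrightarrow> is_sol R1 q2 \<longrightarrow> (\<forall>s\<ge>0. q1 s = q2 s))
    \<and> (\<forall>q. is_sol R1 q \<longrightarrow>
         (\<exists>K. \<forall>s>1.
            \<bar>q s - 48 * R1 ^ 3 / (5 * s ^ 3)\<bar> \<le> K / s ^ 4 \<and>
            \<bar>s * (deriv q s + 144 * R1 ^ 3 / (5 * s ^ 4))\<bar> \<le> K / s ^ 4))"
proof -
  define a where "a = 2 * R1"
  define C where "C = 48 * R1^3 / 5"
  define qp where "qp = (\<lambda>s::real. C * s / (a + s^2)^2)"
  have a: "a > 0" using assms a_def by simp
  have "R1^3 > 0" using assms by simp
  hence C0: "C \<ge> 0" unfolding C_def by simp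
  have d1: "\<And>x. (qp has_real_derivative C * (a - 3 * x^2) / (a + x^2)^3) (at x)"
    unfolding qp_def by (rule qp_d1[OF a])
  have dq: "deriv qp = (\<lambda>x. C * (a - 3 * x^2) / (a + x^2)^3)"
    by (rule ext, rule DERIV_imp_deriv, rule d1)
  have ddq: "deriv (deriv qp) = (\<lambda>x. 12 * C * x * (x^2 - a) / (a + x^2)^4)"
    unfolding dq by (rule ext, rule DERIV_imp_deriv, rule qp_d2[OF a])
  have sol: "is_sol R1 qp"
    unfolding is_sol_def
  proof (intro conjI allI impI)
    show "continuous_on {0..} qp"
      by (rule continuous_at_imp_continuous_on) (use d1 DERIV_isCont in blast)
    have qpe: "qp = (\<lambda>s. poly [:0, C:] s / (a + s^2) ^ Suc 1)"
      unfolding qp_def by (rule ext) (simp add: mult.commute power2_eq_square)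
    thus "smooth_on {0<..} qp" by (subst qpe) (rule rat_smooth[OF a])
    show "deriv (deriv qp) s + (1 / s + 3 * s / (R1 * (1 + s\<^sup>2 / (2 * R1)))) * deriv qp s - qp s / s\<^sup>2 =
       - 12 * s / (1 + s\<^sup>2 / (2 * R1)) ^ 3" if "s > 0" for s
      unfolding ddq unfolding dq by (simp only: qp_def a_def C_def) (use ode[OF assms that] in simp)
    show "qp 0 = 0" unfolding qp_def by simp
    show "(qp \<longlongrightarrow> 0) at_top" unfolding qp_def by (rule lim0[OF a])
  qed
  have U: "\<forall>q1 q2. is_sol R1 q1 \<longrightarrow> is_sol R1 q2 \<longrightarrow> (\<forall>s\<ge>0. q1 s = q2 s)"
    using uniq by (meson order_antisym)
  have A: "\<forall>q. is_sol R1 q \<longrightarrow>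
         (\<exists>K. \<forall>s>1.
            \<bar>q s - 48 * R1 ^ 3 / (5 * s ^ 3)\<bar> \<le> K / s ^ 4 \<and>
            \<bar>s * (deriv q s + 144 * R1 ^ 3 / (5 * s ^ 4))\<bar> \<le> K / s ^ 4)"
  proof (intro allI impI)
    fix q assume q: "is_sol R1 q"
    have qe: "q s = qp s" if "s \<ge> 0" for s using U q sol that by blast
    have dqe: "deriv q s = deriv qp s" if "s > 0" for s
    proof (rule deriv_cong_ev[OF _ refl])
      have "eventually (\<lambda>x. x \<in> {0<..}) (nhds s)" using that
        by (intro eventually_nhds_in_open) auto
      thus "eventually (\<lambda>x. q x = qp x) (nhds s)"
        by (rule eventually_mono) (auto intro: qe)
    qed
    define K where "K = C * (12 * a + 10 * a^2 + 3 * a^3)"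
    show "\<exists>K. \<forall>s>1.
            \<bar>q s - 48 * R1 ^ 3 / (5 * s ^ 3)\<bar> \<le> K / s ^ 4 \<and>
            \<bar>s * (deriv q s + 144 * R1 ^ 3 / (5 * s ^ 4))\<bar> \<le> K / s ^ 4"
    proof (intro exI allI impI conjI)
      fix s :: real assume s: "s > 1"
      have s4: "s^4 > 0" using s by simp
      have k1: "C * (2*a + a^2) / s^4 \<le> K / s^4" unfolding K_def using s4 C0 a
        by (intro divide_right_mono mult_left_mono) auto
      have k2: "C * (10*a + 9*a^2 + 3*a^3) / s^4 \<le> K / s^4" unfolding K_def using s4 C0 a
        by (intro divide_right_mono mult_left_mono) auto
      have "48 * R1 ^ 3 / (5 * s ^ 3) = C / s^3" unfolding C_def by simp
      hence "\<bar>q s - 48 * R1 ^ 3 / (5 * s ^ 3)\<bar> = \<bar>C * s / (a + s^2)^2 - C / s^3\<bar>"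
        using qe[of s] s unfolding qp_def by simp
      thus "\<bar>q s - 48 * R1 ^ 3 / (5 * s ^ 3)\<bar> \<le> K / s ^ 4"
        using bound1[OF a C0 s] k1 by linarith
      have "144 * R1 ^ 3 / (5 * s ^ 4) = 3 * C / s^4" unfolding C_def by simp
      hence "\<bar>s * (deriv q s + 144 * R1 ^ 3 / (5 * s ^ 4))\<bar> = \<bar>s * (C * (a - 3 * s^2) / (a + s^2)^3 + 3 * C / s^4)\<bar>"
        using dqe[of s] s unfolding dq by simp
      thus "\<bar>s * (deriv q s + 144 * R1 ^ 3 / (5 * s ^ 4))\<bar> \<le> K / s ^ 4"
        using bound2[OF a C0 s] k2 by linarith
    qed
  qed
  show ?thesis using sol U A by blast
qed


end
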